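(* Let $a,b\in\mathbb{R}$ with $a+b>-1$, and let $h_0\in\mathbb{R}$ with $h_0>a+1$ and $h_0>b+1$. Then $$\sum_{\ell=0}^{\infty}(1-2h)\,T_a(h)\,T_b(h)\Big|_{h=h_0+\ell}\;=\;-\frac{(a+h_0)(b+h_0)}{a+b+1}\,T_a(h_0)\,T_b(h_0)\;\equiv\;\mathcal{A}_{a,b}(h_0),$$ the series on the left being convergent.
   Context: For real $a$ and $h$, define $T_a(h)=\frac{1}{\Gamma(-a)^2}\frac{\Gamma(h-a-1)}{\Gamma(h+a+1)}$ (with $1/\Gamma(-a)^2=0$ when $a$ is a nonnegative integer). *)

theory Defs
  imports "HOL-Analysis.Analysis"
begin

text \<open>The reciprocal Gamma function rGamma is entire and vanishes exactly at the
  nonpositive integers, so rGamma(-a)^2 realises the convention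
  1/Gamma(-a)^2 = 0 for nonnegative integers a, and division by Gamma(h+a+1)
  is written as multiplication by rGamma(h+a+1).\<close>
definition T :: "real \<Rightarrow> real \<Rightarrow> real" where
  "T a h = (rGamma (- a))\<^sup>2 * Gamma (h - a - 1) * rGamma (h + a + 1)"

end

theory Submission
  imports Defs
begin

lemma poch_pos: "(x::real) > 0 \<Longrightarrow> pochhammer x n > 0"
  by (simp add: pochhammer_pos)

lemma ratio_eq:
  fixes x y :: real
  assumes "x > 0" "y > 0"
  shows "Gamma (x + real (Suc n)) * rGamma (y + real (Suc n)) =
    Gamma x * rGamma y * (rGamma_series x n / rGamma_series y n) * exp ((x - y) * ln (real n))"
proof -
  have xn: "x \<notin> \<int>\<^sub>\<le>\<^sub>0" using assms by (auto elim!: nonpos_Ints_cases)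
  have g: "Gamma (x + real (Suc n)) = pochhammer x (Suc n) * Gamma x"
    using pochhammer_Gamma[OF xn, of "Suc n"] Gamma_nonzero[OF xn] by (simp add: field_simps)
  have py: "pochhammer y (Suc n) > 0" using assms by (simp add: pochhammer_pos)
  have r: "rGamma (y + real (Suc n)) = rGamma y / pochhammer y (Suc n)"
    using pochhammer_rGamma[of y "Suc n"] py by (simp add: field_simps)
  have e: "exp ((x - y) * ln (real n)) = exp (x * ln (real n)) / exp (y * ln (real n))"
    by (simp add: exp_diff left_diff_distrib)
  have fn: "fact n > (0::real)" by simp
  show ?thesis unfolding g r e rGamma_series_def
    using py fn by (simp add: field_simps)
qed

lemma expo: assumes "(e::real) < 0" shows "(\<lambda>n::nat. exp (e * ln (real n))) \<longlonglongrightarrow> 0"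
proof -
  have "(\<lambda>n::nat. real n powr e) \<longlonglongrightarrow> 0"
    using tendsto_neg_powr[OF assms filterlim_real_sequentially] .
  moreover have "eventually (\<lambda>n. real n powr e = exp (e * ln (real n))) sequentially"
    using eventually_gt_at_top[of 0]
  proof eventually_elim
    case (elim n) then show ?case by (simp add: powr_def)
  qed
  ultimately show ?thesis by (rule Lim_transform_eventually)
qed

lemma Tshift:
  assumes "h > c + 1" "h + c + 1 > 0"
  shows "T c (h + 1) = T c h * (h - c - 1) / (h + c + 1)"
proof -
  have n1: "h - c - 1 \<notin> \<int>\<^sub>\<le>\<^sub>0" using assms by (auto elim!: nonpos_Ints_cases)
  have e1: "h + 1 - c - 1 = h - c - 1 + 1" by simp
  have g: "Gamma (h + 1 - c - 1) = (h - c - 1) * Gamma (h - c - 1)"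
    unfolding e1 by (rule Gamma_plus1[OF n1])
  have e2: "h + 1 + c + 1 = h + c + 1 + 1" by simp
  have nz: "h + c + 1 \<noteq> 0" using assms by simp
  have r0: "(h + c + 1) * rGamma (h + c + 1 + 1) = rGamma (h + c + 1)" by (rule rGamma_plus1)
  have r: "rGamma (h + 1 + c + 1) = rGamma (h + c + 1) / (h + c + 1)"
    unfolding e2 using r0 nz by (simp add: eq_divide_eq mult.commute)
  show ?thesis unfolding T_def g r by (simp only: divide_inverse mult_ac)
qed

lemma alg:
  fixes a b h u v :: real
  assumes "a + b + 1 > 0" "h + a + 1 > 0" "h + b + 1 > 0"
  shows "(1 - 2 * h) * u * v = - ((a + h) * (b + h) / (a + b + 1)) * u * v
     - (- ((a + (h + 1)) * (b + (h + 1)) / (a + b + 1)) * (u * (h - a - 1) / (h + a + 1)) * (v * (h - b - 1) / (h + b + 1)))"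
proof -
  have "- ((a + (h + 1)) * (b + (h + 1)) / (a + b + 1)) * (u * (h - a - 1) / (h + a + 1)) * (v * (h - b - 1) / (h + b + 1))
     = - ((h + a + 1) * (h + b + 1) / (a + b + 1)) * (u * (h - a - 1) / (h + a + 1)) * (v * (h - b - 1) / (h + b + 1))"
    by (simp add: add_ac)
  also have "\<dots> = - (u * (h - a - 1)) * (v * (h - b - 1)) / (a + b + 1) * ((h + a + 1) / (h + a + 1)) * ((h + b + 1) / (h + b + 1))"
    by (simp only: divide_inverse mult_minus_left mult_minus_right ac_simps)
  also have "\<dots> = - (u * (h - a - 1)) * (v * (h - b - 1)) / (a + b + 1)"
  proof -
    have q: "(h + a + 1) / (h + a + 1) = 1" "(h + b + 1) / (h + b + 1) = 1" using assms by simp_all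
    show ?thesis unfolding q by simp
  qed
  finally have e: "- ((a + (h + 1)) * (b + (h + 1)) / (a + b + 1)) * (u * (h - a - 1) / (h + a + 1)) * (v * (h - b - 1) / (h + b + 1))
     = - (u * (h - a - 1)) * (v * (h - b - 1)) / (a + b + 1)" .
  have k: "(h - a - 1) * (h - b - 1) - (a + h) * (b + h) = (a + b + 1) * (1 - 2 * h)" by (simp add: algebra_simps)
  have "- ((a + h) * (b + h) / (a + b + 1)) * u * v - (- (u * (h - a - 1)) * (v * (h - b - 1)) / (a + b + 1))
     = ((h - a - 1) * (h - b - 1) - (a + h) * (b + h)) / (a + b + 1) * (u * v)"
    by (simp add: divide_inverse algebra_simps)
  also have "\<dots> = (1 - 2 * h) * u * v" unfolding k using assms(1) by simp
  finally show ?thesis unfolding e by simp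
qed

lemma Tred:
  assumes "s + c > 0"
  shows "(c + s) * T c s = (rGamma (- c))\<^sup>2 * (Gamma (s - c - 1) * rGamma (s + c))"
proof -
  have e: "(s + c) * rGamma (s + c + 1) = rGamma (s + c)" using rGamma_plus1[of "s + c"] by (simp add: add_ac)
  have "(c + s) * T c s = (rGamma (- c))\<^sup>2 * Gamma (s - c - 1) * ((s + c) * rGamma (s + c + 1))"
    unfolding T_def by (simp add: algebra_simps)
  then show ?thesis unfolding e by simp
qed

theorem mainTheorem1:
  fixes a b h0 :: real
  assumes "a + b > -1" and "h0 > a + 1" and "h0 > b + 1"
  shows "(\<lambda>l::nat. let h = h0 + real l in (1 - 2 * h) * T a h * T b h)
           sums (- ((a + h0) * (b + h0) / (a + b + 1)) * T a h0 * T b h0)"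
proof -
  define F where "F h = - ((a + h) * (b + h) / (a + b + 1)) * T a h * T b h" for h
  have ab: "a + b + 1 > 0" using assms by simp
  have step: "(1 - 2 * h) * T a h * T b h = F h - F (h + 1)" if h: "h > a + 1" "h > b + 1" for h
  proof -
    have p1: "h + a + 1 > 0" "h + b + 1 > 0" using h assms by linarith+
    show ?thesis unfolding F_def Tshift[OF h(1) p1(1)] Tshift[OF h(2) p1(2)]
      by (rule alg[OF ab p1])
  qed
  define xa where "xa = h0 - a - 1"
  define ya where "ya = h0 + a"
  define xb where "xb = h0 - b - 1"
  define yb where "yb = h0 + b"
  have pos: "xa > 0" "ya > 0" "xb > 0" "yb > 0" using assms unfolding xa_def ya_def xb_def yb_def by linarith+
  define K where "K = - (1 / (a + b + 1)) * (rGamma (- a))\<^sup>2 * (rGamma (- b))\<^sup>2 * (Gamma xa * rGamma ya) * (Gamma xb * rGamma yb)"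
  have Feq: "F (h0 + real (Suc n)) = K * ((rGamma_series xa n / rGamma_series ya n) * (rGamma_series xb n / rGamma_series yb n))
       * (exp ((xa - ya) * ln (real n)) * exp ((xb - yb) * ln (real n)))" for n
  proof -
    let ?s = "h0 + real (Suc n)"
    have s1: "?s + a > 0" "?s + b > 0" using pos unfolding ya_def yb_def by simp_all
    have "F ?s = - (1 / (a + b + 1)) * ((a + ?s) * T a ?s) * ((b + ?s) * T b ?s)"
      unfolding F_def by (simp add: divide_inverse mult_ac)
    also have "\<dots> = - (1 / (a + b + 1)) * ((rGamma (- a))\<^sup>2 * (Gamma (xa + real (Suc n)) * rGamma (ya + real (Suc n))))
       * ((rGamma (- b))\<^sup>2 * (Gamma (xb + real (Suc n)) * rGamma (yb + real (Suc n))))"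
      unfolding Tred[OF s1(1)] Tred[OF s1(2)] xa_def ya_def xb_def yb_def by (simp add: algebra_simps)
    also have "\<dots> = K * ((rGamma_series xa n / rGamma_series ya n) * (rGamma_series xb n / rGamma_series yb n))
       * (exp ((xa - ya) * ln (real n)) * exp ((xb - yb) * ln (real n)))"
      unfolding ratio_eq[OF pos(1,2)] ratio_eq[OF pos(3,4)] K_def by (simp add: mult_ac)
    finally show ?thesis .
  qed
  have nz: "rGamma ya \<noteq> 0" "rGamma yb \<noteq> 0" using pos by (auto simp: rGamma_eq_zero_iff elim!: nonpos_Ints_cases)
  have e0: "(\<lambda>n. exp ((xa - ya) * ln (real n)) * exp ((xb - yb) * ln (real n))) \<longlonglongrightarrow> 0 * 0"
  proof -
    have "(\<lambda>n. exp (((xa - ya) + (xb - yb)) * ln (real n))) \<longlonglongrightarrow> 0"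
      by (rule expo) (use assms in \<open>simp add: xa_def ya_def xb_def yb_def\<close>)
    then show ?thesis by (simp add: exp_add[symmetric] distrib_right)
  qed
  have "(\<lambda>n. K * ((rGamma_series xa n / rGamma_series ya n) * (rGamma_series xb n / rGamma_series yb n))
       * (exp ((xa - ya) * ln (real n)) * exp ((xb - yb) * ln (real n))))
      \<longlonglongrightarrow> K * ((rGamma xa / rGamma ya) * (rGamma xb / rGamma yb)) * (0 * 0)"
    by (intro tendsto_mult tendsto_const tendsto_divide rGamma_series_LIMSEQ e0 nz)
  hence "(\<lambda>n. F (h0 + real (Suc n))) \<longlonglongrightarrow> 0" unfolding Feq by simp
  hence lim: "(\<lambda>n. F (h0 + real n)) \<longlonglongrightarrow> 0" using filterlim_sequentially_Suc[of "\<lambda>n. F (h0 + real n)"] by simp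
  have tele: "(\<lambda>n. F (h0 + real n) - F (h0 + real (Suc n))) sums (F (h0 + real 0) - 0)"
    by (rule telescope_sums'[OF lim])
  have eqf: "(\<lambda>n. F (h0 + real n) - F (h0 + real (Suc n))) = (\<lambda>l::nat. let h = h0 + real l in (1 - 2 * h) * T a h * T b h)"
  proof
    fix n
    have "h0 + real n > a + 1" "h0 + real n > b + 1" using assms by linarith+
    then show "F (h0 + real n) - F (h0 + real (Suc n)) = (let h = h0 + real n in (1 - 2 * h) * T a h * T b h)"
      using step[of "h0 + real n"] by (simp add: Let_def add_ac)
  qed
  have F0: "F (h0 + real 0) - 0 = - ((a + h0) * (b + h0) / (a + b + 1)) * T a h0 * T b h0"
    by (simp add: F_def)
  show ?thesis using tele unfolding eqf F0 .
qed

end
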